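(* Let $F$ be a field whose characteristic is not $2$, let $\alpha\in F\setminus\{0\}$, and let $k\geq 4$ be an integer. Then every $x\in F$ can be written as $x=a_1a_2\cdots a_k$ with $a_1,\ldots,a_k\in F$ satisfying $a_1+a_2+\cdots+a_k=\alpha$. *)

theory Defs
  imports Main
begin

end

theory Submission
  imports Defs
begin

lemma four_gen:
  fixes \<alpha> x c :: "'a :: field"
  assumes "\<alpha> \<noteq> 0" "c \<noteq> 0" "c * c \<noteq> x"
  shows "\<exists>a b d e. a + b + d + e = \<alpha> \<and> a * b * d * e = x"
proof -
  define m where "m = (x / c - c) / \<alpha>"
  have "x / c - c \<noteq> 0" using assms by (auto simp: field_simps)
  hence m0: "m \<noteq> 0" using assms by (simp add: m_def)
  have "(\<alpha> + c/m) * m * (-m) * (-c/m) = c * (\<alpha> * m + c)"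
    using m0 by (simp add: field_simps)
  also have "\<dots> = x" using assms by (simp add: m_def field_simps)
  finally show ?thesis
    by (rule_tac x="\<alpha> + c/m" in exI, rule_tac x=m in exI, rule_tac x="-m" in exI,
        rule_tac x="-c/m" in exI) simp
qed

lemma four:
  fixes \<alpha> x :: "'a :: field"
  assumes "(2::'a) \<noteq> 0" "\<alpha> \<noteq> 0"
  shows "\<exists>a b d e. a + b + d + e = \<alpha> \<and> a * b * d * e = x"
proof (cases "x = 1")
  case False
  then show ?thesis using four_gen[of \<alpha> 1 x] assms by simp
next
  case True
  show ?thesis
  proof (cases "\<alpha> * \<alpha> = 1")
    case False
    then show ?thesis using four_gen[of \<alpha> \<alpha> x] assms True by simp
  next
    case a1: True
    show ?thesis
    proof (cases "(3::'a) = 0")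
      case True
      have "\<alpha> + \<alpha> + \<alpha> + \<alpha> = \<alpha> + 3 * \<alpha>" by (simp add: algebra_simps)
      also have "\<dots> = \<alpha>" using True by simp
      finally have s: "\<alpha> + \<alpha> + \<alpha> + \<alpha> = \<alpha>" .
      have "\<alpha> * \<alpha> * \<alpha> * \<alpha> = (\<alpha> * \<alpha>) * (\<alpha> * \<alpha>)" by (simp add: algebra_simps)
      hence "\<alpha> * \<alpha> * \<alpha> * \<alpha> = x" using a1 \<open>x = 1\<close> by simp
      then show ?thesis using s by blast
    next
      case False
      have "(2::'a) * 2 \<noteq> 1"
      proof
        assume "(2::'a) * 2 = 1"
        hence "(3::'a) + 1 = 0 + 1" by simp
        hence "(3::'a) = 0" by (rule add_right_imp_eq)
        with False show False by simp
      qed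
      then show ?thesis using four_gen[of \<alpha> 2 x] assms True by simp
    qed
  qed
qed

theorem theorem1p1:
  fixes \<alpha> x :: "'a :: field" and k :: nat
  assumes "(2::'a) \<noteq> 0"
    and "\<alpha> \<noteq> 0"
    and "k \<ge> 4"
  shows "\<exists>a :: nat \<Rightarrow> 'a. (\<Prod>i<k. a i) = x \<and> (\<Sum>i<k. a i) = \<alpha>"
  using assms(3,2)
proof (induction k arbitrary: \<alpha> x rule: dec_induct)
  case base
  obtain a b d e where h: "a + b + d + e = \<alpha>" "a * b * d * e = x"
    using four[OF assms(1) base] by blast
  let ?f = "\<lambda>i::nat. if i = 0 then a else if i = 1 then b else if i = 2 then d else e"
  have "(\<Prod>i<4. ?f i) = x" "(\<Sum>i<4. ?f i) = \<alpha>"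
    using h by (simp_all add: numeral_eq_Suc lessThan_Suc algebra_simps)
  then show ?case by blast
next
  case (step k)
  define e :: 'a where "e = (if \<alpha> = 1 then -1 else 1)"
  have e0: "e \<noteq> 0" by (simp add: e_def)
  have ae: "\<alpha> - e \<noteq> 0"
  proof
    assume "\<alpha> - e = 0"
    hence "\<alpha> = e" by simp
    thus False using assms(1) by (auto simp: e_def split: if_splits)
  qed
  obtain a where a: "(\<Prod>i<k. a i) = x / e" "(\<Sum>i<k. a i) = \<alpha> - e"
    using step.IH[OF ae] by blast
  let ?g = "a(k := e)"
  have "(\<Prod>i<k. ?g i) = (\<Prod>i<k. a i)" by (rule prod.cong) auto
  moreover have "(\<Sum>i<k. ?g i) = (\<Sum>i<k. a i)" by (rule sum.cong) auto
  ultimately have "(\<Prod>i<Suc k. ?g i) = x" "(\<Sum>i<Suc k. ?g i) = \<alpha>"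
    using a e0 by simp_all
  then show ?case by blast
qed

end
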